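(* Assume (A1) and (A4). Let $\alpha\in\mathbb R\setminus\{1\}$, $\eta>0$, $\kappa$ with $(\alpha-1)\kappa\ge0$, $\kappa'\in\mathbb R$, and let $\mu\in\mathcal M_1(\mathsf T)$ satisfy $\Psi_\alpha(\mu)<\infty$ and $0<\mu\Big(\exp\Big(-\eta\frac{b_{\mu,\alpha}+1/(\alpha-1)}{(\alpha-1)(\mu(b_{\mu,\alpha})+\kappa)+1}\Big)\Big)<\infty$. Then (i) $\Psi_\alpha(\mathcal I^{AR}_\alpha(\mu))\le\Psi_\alpha(\mu)$; (ii) $\Psi_\alpha(\mathcal I^{AR}_\alpha(\mu))=\Psi_\alpha(\mu)$ if and only if $\mathcal I^{AR}_\alpha(\mu)=\mu$.
   Context: Let $(\mathsf Y,\mathcal Y,\nu)$ be a measure space with $\nu$ $\sigma$-finite, $(\mathsf T,\mathcal T)$ a measurable space, $\mathcal M_1(\mathsf T)$ its probability measures. Let $k:\mathsf T\times\mathsf Y\to[0,\infty)$ be measurable with $\int k(\theta,y)\nu(dy)=1$, $p$ measurable positive on $\mathsf Y$; $\mu k(y)=\int\mu(d\theta)k(\theta,y)$, $\mu(g)=\int g\,d\mu$. $f_0(u)=u-1-\log u$, $f_\alpha(u)=\frac{1}{\alpha(\alpha-1)}[u^\alpha-1-\alpha(u-1)]$ for $\alpha\notin\{0,1\}$, $f_\alpha'(u)=\frac{u^{\alpha-1}-1}{\alpha-1}$; $\Psi_\alpha(\mu)=\int f_\alpha(\mu k/p)p\,d\nu$; $b_{\mu,\alpha}(\theta)=\int k(\theta,y)f_\alpha'(\mu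 k(y)/p(y))\nu(dy)$. Assumption (A1): $k>0$, $p>0$ everywhere and $\int p\,d\nu<\infty$. Renyi Descent transition: $\mathcal I^{AR}_\alpha(\mu)(d\theta)=\frac{\mu(d\theta)\exp[-\eta\, b_{\mu,\alpha}(\theta)/((\alpha-1)(\mu(b_{\mu,\alpha})+\kappa)+1)]}{\mu(\exp[-\eta\, b_{\mu,\alpha}/((\alpha-1)(\mu(b_{\mu,\alpha})+\kappa)+1)])}$. $D^{AR}$ is an interval of $\mathbb R$ such that for all $\theta\in\mathsf T$, $\mu\in\mathcal M_1(\mathsf T)$, both $\frac{b_{\mu,\alpha}(\theta)+1/(\alpha-1)}{(\alpha-1)(\mu(b_{\mu,\alpha})+\kappa)+1}+\kappa'$ and $\frac{\mu(b_{\mu,\alpha})+1/(\alpha-1)}{(\alpha-1)(\mu(b_{\mu,\alpha})+\kappa)+1}+\kappa'$ lie in $D^{AR}$. Assumption (A4): $1-\eta(\alpha-1)(v-\kappa')\ge0$ for all $v\in D^{AR}$. *)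

theory Defs
  imports "HOL-Probability.Probability"
begin

definition f_alpha :: "real \<Rightarrow> real \<Rightarrow> real" where
  "f_alpha \<alpha> u = (if \<alpha> = 0 then u - 1 - ln u
                   else (u powr \<alpha> - 1 - \<alpha> * (u - 1)) / (\<alpha> * (\<alpha> - 1)))"

definition f_alpha' :: "real \<Rightarrow> real \<Rightarrow> real" where
  "f_alpha' \<alpha> u = (u powr (\<alpha> - 1) - 1) / (\<alpha> - 1)"

definition mix :: "'t measure \<Rightarrow> ('t \<Rightarrow> 'y \<Rightarrow> real) \<Rightarrow> 'y \<Rightarrow> real" where
  "mix \<mu> k y = (\<integral>\<theta>. k \<theta> y \<partial>\<mu>)"

definition Psi :: "'y measure \<Rightarrow> ('t \<Rightarrow> 'y \<Rightarrow> real) \<Rightarrow> ('y \<Rightarrow> real) \<Rightarrow> real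
                   \<Rightarrow> 't measure \<Rightarrow> ennreal" where
  "Psi \<nu> k p \<alpha> \<mu> = (\<integral>\<^sup>+ y. ennreal (f_alpha \<alpha> (mix \<mu> k y / p y) * p y) \<partial>\<nu>)"

definition bfun :: "'y measure \<Rightarrow> ('t \<Rightarrow> 'y \<Rightarrow> real) \<Rightarrow> ('y \<Rightarrow> real) \<Rightarrow> real
                   \<Rightarrow> 't measure \<Rightarrow> 't \<Rightarrow> real" where
  "bfun \<nu> k p \<alpha> \<mu> \<theta> = (\<integral>y. k \<theta> y * f_alpha' \<alpha> (mix \<mu> k y / p y) \<partial>\<nu>)"

definition mub :: "'y measure \<Rightarrow> ('t \<Rightarrow> 'y \<Rightarrow> real) \<Rightarrow> ('y \<Rightarrow> real) \<Rightarrow> real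
                   \<Rightarrow> 't measure \<Rightarrow> real" where
  "mub \<nu> k p \<alpha> \<mu> = (\<integral>\<theta>. bfun \<nu> k p \<alpha> \<mu> \<theta> \<partial>\<mu>)"

definition IAR :: "'y measure \<Rightarrow> ('t \<Rightarrow> 'y \<Rightarrow> real) \<Rightarrow> ('y \<Rightarrow> real) \<Rightarrow> real \<Rightarrow> real
                   \<Rightarrow> real \<Rightarrow> 't measure \<Rightarrow> 't measure" where
  "IAR \<nu> k p \<alpha> \<eta> \<kappa> \<mu> =
     (let w = (\<lambda>\<theta>. exp (- \<eta> * bfun \<nu> k p \<alpha> \<mu> \<theta>
                       / ((\<alpha> - 1) * (mub \<nu> k p \<alpha> \<mu> + \<kappa>) + 1)))
      in density \<mu> (\<lambda>\<theta>. ennreal (w \<theta> / (\<integral>\<theta>'. w \<theta>' \<partial>\<mu>))))"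

end

theory Submission
  imports Defs
begin


lemma aux1: assumes "(a::real) \<noteq> 0" "d \<noteq> 0" "u > 0" shows
  "(G*U - 1 - a*(g*u-1))/(a*d) = (U - 1 - a*(u-1))/(a*d) + U * ((G - 1 - a*(g-1))/(a*d)) + u * ((U/u - 1)/d) * (g-1)"
  using assms by (simp add: field_simps)
lemma aux2: assumes "(a::real) \<noteq> 0" "d \<noteq> 0" "m > 0" "B > 0" shows
  "(A - 1 - a*(x-1))/(a*d) - (B - 1 - a*(m-1))/(a*d) - ((B/m) - 1)/d*(x-m)
   = B * ((A/B) - 1 - a*(x/m - 1))/(a*d)"
  using assms by (simp add: field_simps)

lemma f_alpha_0: "f_alpha 0 = (\<lambda>s. s - 1 - ln s)" by (simp add: f_alpha_def fun_eq_iff)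
lemma f_alpha_n0: "\<alpha> \<noteq> 0 \<Longrightarrow> f_alpha \<alpha> = (\<lambda>s. (s powr \<alpha> - 1 - \<alpha> * (s - 1)) / (\<alpha> * (\<alpha> - 1)))"
  by (simp add: f_alpha_def fun_eq_iff)

lemma f_deriv:
  assumes "s > 0" "\<alpha> \<noteq> 1"
  shows "(f_alpha \<alpha> has_real_derivative f_alpha' \<alpha> s) (at s)"
proof (cases "\<alpha> = 0")
  case True
  have "((\<lambda>s. s - 1 - ln s) has_real_derivative (1 - 1/s)) (at s)"
    using assms by (auto intro!: derivative_eq_intros)
  moreover have "f_alpha' \<alpha> s = 1 - 1/s" using True assms by (simp add: f_alpha'_def powr_neg_one)
  ultimately show ?thesis using True by (simp add: f_alpha_0)
next
  case False
  have "((\<lambda>s. (s powr \<alpha> - 1 - \<alpha> * (s - 1)) / (\<alpha> * (\<alpha> - 1))) has_real_derivative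
        ((\<alpha> * s powr (\<alpha> - 1) - \<alpha>) / (\<alpha> * (\<alpha> - 1)))) (at s)"
    using assms False by (auto intro!: derivative_eq_intros has_real_derivative_powr)
  moreover have "(\<alpha> * s powr (\<alpha> - 1) - \<alpha>) / (\<alpha> * (\<alpha> - 1)) = f_alpha' \<alpha> s"
    using False assms by (simp add: f_alpha'_def field_simps)
  ultimately show ?thesis using False unfolding f_alpha_n0[OF False] by simp
qed

lemma f_one: "f_alpha \<alpha> 1 = 0" by (simp add: f_alpha_def)

lemma f'_sign:
  assumes "\<xi> > 0" "\<alpha> \<noteq> 1"
  shows "\<xi> > 1 \<Longrightarrow> f_alpha' \<alpha> \<xi> > 0" "\<xi> < 1 \<Longrightarrow> f_alpha' \<alpha> \<xi> < 0"
proof -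
  have e: "f_alpha' \<alpha> \<xi> = (exp ((\<alpha>-1) * ln \<xi>) - 1) / (\<alpha> - 1)"
    using assms by (simp add: f_alpha'_def powr_def)
  have key: "\<And>t::real. t > 0 \<Longrightarrow> exp t - 1 > 0" "\<And>t::real. t < 0 \<Longrightarrow> exp t - 1 < 0" by simp_all
  show "\<xi> > 1 \<Longrightarrow> f_alpha' \<alpha> \<xi> > 0"
  proof -
    assume "\<xi> > 1" then have l: "ln \<xi> > 0" by simp
    show ?thesis
    proof (cases "\<alpha> > 1")
      case True then show ?thesis unfolding e using l key(1)[of "(\<alpha>-1)*ln \<xi>"] by (simp add: divide_pos_pos)
    next
      case False then have "\<alpha> < 1" using assms by simp
      then show ?thesis unfolding e using l key(2)[of "(\<alpha>-1)*ln \<xi>"]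
        by (simp add: divide_neg_neg mult_neg_pos)
    qed
  qed
  show "\<xi> < 1 \<Longrightarrow> f_alpha' \<alpha> \<xi> < 0"
  proof -
    assume "\<xi> < 1" then have l: "ln \<xi> < 0" using assms by simp
    show ?thesis
    proof (cases "\<alpha> > 1")
      case True then show ?thesis unfolding e using l key(2)[of "(\<alpha>-1)*ln \<xi>"]
        by (simp add: divide_neg_pos mult_pos_neg)
    next
      case False then have "\<alpha> < 1" using assms by simp
      then show ?thesis unfolding e using l key(1)[of "(\<alpha>-1)*ln \<xi>"]
        by (simp add: divide_pos_neg mult_neg_neg)
    qed
  qed
qed

lemma f_pos:
  assumes "s > 0" "\<alpha> \<noteq> 1" "s \<noteq> 1"
  shows "f_alpha \<alpha> s > 0"
proof (cases "s > 1")
  case True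
  obtain z where z: "1 < z" "z < s" "f_alpha \<alpha> s - f_alpha \<alpha> 1 = (s - 1) * f_alpha' \<alpha> z"
    using MVT2[OF True, of "f_alpha \<alpha>" "f_alpha' \<alpha>"] f_deriv assms by force
  then show ?thesis using f'_sign(1)[of z \<alpha>] assms by (simp add: f_one)
next
  case False then have "s < 1" using assms by simp
  obtain z where z: "s < z" "z < 1" "f_alpha \<alpha> 1 - f_alpha \<alpha> s = (1 - s) * f_alpha' \<alpha> z"
    using MVT2[OF \<open>s<1\<close>, of "f_alpha \<alpha>" "f_alpha' \<alpha>"] f_deriv assms by force
  moreover have "(1 - s) * f_alpha' \<alpha> z < 0" using f'_sign(2)[of z \<alpha>] assms z \<open>s<1\<close>
    by (simp add: mult_pos_neg)
  ultimately show ?thesis by (simp add: f_one)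
qed

lemma f_nonneg:
  assumes "s > 0" "\<alpha> \<noteq> 1"
  shows "f_alpha \<alpha> s \<ge> 0"
  using f_pos[OF assms] f_one[of \<alpha>] by (cases "s = 1") force+

lemma bregman:
  assumes "x > 0" "m > 0" "\<alpha> \<noteq> 1"
  shows "f_alpha \<alpha> x - f_alpha \<alpha> m - f_alpha' \<alpha> m * (x - m) = m powr \<alpha> * f_alpha \<alpha> (x / m)"
proof (cases "\<alpha> = 0")
  case True
  then show ?thesis using assms
    by (simp add: f_alpha_def f_alpha'_def powr_neg_one ln_div field_simps)
next
  case False
  have p: "(x/m) powr \<alpha> = x powr \<alpha> / m powr \<alpha>" using assms by (simp add: powr_divide)
  have q: "m powr (\<alpha> - 1) = m powr \<alpha> / m" using assms by (simp add: powr_diff)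
  have "m powr \<alpha> > 0" using assms by simp
  then show ?thesis using False assms aux2[of \<alpha> "\<alpha>-1" m "m powr \<alpha>" "x powr \<alpha>" x]
    unfolding f_alpha_def f_alpha'_def p q by simp
qed

lemma tangent:
  assumes "x > 0" "m > 0" "\<alpha> \<noteq> 1"
  shows "f_alpha \<alpha> m + f_alpha' \<alpha> m * (x - m) \<le> f_alpha \<alpha> x"
    and "x \<noteq> m \<Longrightarrow> f_alpha \<alpha> m + f_alpha' \<alpha> m * (x - m) < f_alpha \<alpha> x"
proof -
  have "m powr \<alpha> * f_alpha \<alpha> (x / m) \<ge> 0" using f_nonneg[of "x/m" \<alpha>] assms by simp
  then show "f_alpha \<alpha> m + f_alpha' \<alpha> m * (x - m) \<le> f_alpha \<alpha> x" using bregman[OF assms] by linarith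
  assume "x \<noteq> m"
  then have "x / m \<noteq> 1" using assms by simp
  then have "m powr \<alpha> * f_alpha \<alpha> (x / m) > 0" using f_pos[of "x/m" \<alpha>] assms by simp
  then show "f_alpha \<alpha> m + f_alpha' \<alpha> m * (x - m) < f_alpha \<alpha> x" using bregman[OF assms] by linarith
qed

lemma decomp:
  assumes "u > 0" "g > 0" "\<alpha> \<noteq> 1"
  shows "f_alpha \<alpha> (g * u) = f_alpha \<alpha> u + u powr \<alpha> * f_alpha \<alpha> g + u * f_alpha' \<alpha> u * (g - 1)"
proof (cases "\<alpha> = 0")
  case True
  then show ?thesis using assms
    by (simp add: f_alpha_def f_alpha'_def powr_neg_one ln_mult field_simps)
next
  case False
  have p: "(g*u) powr \<alpha> = g powr \<alpha> * u powr \<alpha>" using assms by (simp add: powr_mult)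
  have q: "u powr (\<alpha> - 1) = u powr \<alpha> / u" using assms by (simp add: powr_diff)
  show ?thesis using False assms aux1[of \<alpha> "\<alpha>-1" u "g powr \<alpha>" "u powr \<alpha>" g]
    unfolding f_alpha_def f_alpha'_def p q by (simp add: mult.commute)
qed



lemma h_mono:
  fixes r a b :: real
  assumes "r > 0" "0 \<le> a" "a \<le> b" "r * b \<le> 1"
  shows "a * exp (- r * a) \<le> b * exp (- r * b)"
proof (rule DERIV_nonneg_imp_increasing_open[of a b "\<lambda>x. x * exp (- r * x)"])
  show "a \<le> b" by fact
  fix x assume x: "a < x" "x < b"
  have "((\<lambda>x. x * exp (- r * x)) has_real_derivative (exp (- r * x) * (1 - r * x))) (at x)"
    by (auto intro!: derivative_eq_intros simp: algebra_simps)
  moreover have "r * x \<le> 1" using x assms by (smt (verit) mult_left_mono)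
  ultimately show "\<exists>y. ((\<lambda>x. x * exp (- r * x)) has_real_derivative y) (at x) \<and> 0 \<le> y" by auto
next
  show "continuous_on {a..b} (\<lambda>x. x * exp (- r * x))" by (intro continuous_intros)
qed

lemma core_pw:
  fixes \<alpha> r \<beta> x0 :: real
  assumes a: "\<alpha> \<noteq> 1" and r: "r > 0" and b: "0 \<le> \<beta>" "r * \<beta> \<le> 1" and x: "0 \<le> x0" "r * x0 \<le> 1"
  defines "g \<equiv> exp (- r * (\<beta> - x0) / (\<alpha> - 1))"
  shows "\<beta> * f_alpha \<alpha> g + (g - 1) * (\<beta> - x0) / (\<alpha> - 1) \<le> 0"
    and "g \<noteq> 1 \<Longrightarrow> \<beta> * f_alpha \<alpha> g + (g - 1) * (\<beta> - x0) / (\<alpha> - 1) < 0"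
proof -
  have gpos: "g > 0" unfolding g_def by simp
  have lng: "ln g = - r * (\<beta> - x0) / (\<alpha> - 1)" unfolding g_def by simp
  define E where "E = exp (- r * (\<beta> - x0))"
  have gp: "g powr (\<alpha> - 1) = E" unfolding powr_def E_def using gpos a lng by simp
  have tan: "f_alpha \<alpha> g + f_alpha' \<alpha> g * (1 - g) \<le> f_alpha \<alpha> 1"
    using tangent(1)[of 1 g \<alpha>] gpos a by simp
  have tans: "g \<noteq> 1 \<Longrightarrow> f_alpha \<alpha> g + f_alpha' \<alpha> g * (1 - g) < f_alpha \<alpha> 1"
    using tangent(2)[of 1 g \<alpha>] gpos a by simp
  have f'g: "f_alpha' \<alpha> g = (E - 1) / (\<alpha> - 1)" unfolding f_alpha'_def gp ..
  have k: "(E - 1) / (\<alpha> - 1) * (1 - g) = - ((E - 1) * (g - 1) / (\<alpha> - 1))"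
  proof -
    have "(E - 1) * (1 - g) = - ((E - 1) * (g - 1))" by (simp add: algebra_simps)
    then show ?thesis by (metis minus_divide_left times_divide_eq_left)
  qed
  have fg: "f_alpha \<alpha> g \<le> (E - 1) * (g - 1) / (\<alpha> - 1)"
    using tan unfolding f_one f'g k by linarith
  have fgs: "g \<noteq> 1 \<Longrightarrow> f_alpha \<alpha> g < (E - 1) * (g - 1) / (\<alpha> - 1)"
    using tans unfolding f_one f'g k by linarith
  have eq: "\<beta> * ((E - 1) * (g - 1) / (\<alpha> - 1)) + (g - 1) * (\<beta> - x0) / (\<alpha> - 1)
        = (g - 1) / (\<alpha> - 1) * (\<beta> * E - x0)"
    by (simp add: add_divide_distrib[symmetric] algebra_simps)
  have bE: "\<beta> * E - x0 = exp (r * x0) * (\<beta> * exp (- r * \<beta>) - x0 * exp (- r * x0))"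
    unfolding E_def by (simp add: algebra_simps exp_add[symmetric] exp_diff)
  have sg1: "\<beta> \<ge> x0 \<Longrightarrow> (g - 1) / (\<alpha> - 1) \<le> 0"
  proof -
    assume h: "\<beta> \<ge> x0"
    show ?thesis
    proof (cases "\<alpha> > 1")
      case True
      then have "- r * (\<beta> - x0) / (\<alpha> - 1) \<le> 0" using r h by (simp add: divide_nonpos_pos mult_nonneg_nonneg)
      then have "g \<le> 1" unfolding g_def by simp
      then show ?thesis using True by (simp add: divide_nonpos_pos)
    next
      case False then have "\<alpha> < 1" using a by simp
      moreover have "r * (\<beta> - x0) \<ge> 0" using r h by simp
      ultimately have "- r * (\<beta> - x0) / (\<alpha> - 1) \<ge> 0" by (simp add: divide_nonneg_neg)
      then have "g \<ge> 1" unfolding g_def by simp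
      then show ?thesis using \<open>\<alpha> < 1\<close> by (simp add: divide_nonneg_neg)
    qed
  qed
  have sg2: "\<beta> < x0 \<Longrightarrow> (g - 1) / (\<alpha> - 1) > 0"
  proof -
    assume h: "\<beta> < x0"
    show ?thesis
    proof (cases "\<alpha> > 1")
      case True
      moreover have "r * (x0 - \<beta>) > 0" using r h by simp
      ultimately have "- r * (\<beta> - x0) / (\<alpha> - 1) > 0" by (simp add: divide_pos_pos algebra_simps)
      then have "g > 1" unfolding g_def by simp
      then show ?thesis using True by (simp add: divide_pos_pos)
    next
      case False then have "\<alpha> < 1" using a by simp
      moreover have "r * (x0 - \<beta>) > 0" using r h by simp
      ultimately have "- r * (\<beta> - x0) / (\<alpha> - 1) < 0" by (simp add: divide_pos_neg algebra_simps)
      then have "g < 1" unfolding g_def by simp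
      then show ?thesis using \<open>\<alpha> < 1\<close> by (simp add: divide_neg_neg)
    qed
  qed
  have second: "(g - 1) / (\<alpha> - 1) * (\<beta> * E - x0) \<le> 0"
  proof (cases "\<beta> \<ge> x0")
    case True
    have "x0 * exp (- r * x0) \<le> \<beta> * exp (- r * \<beta>)" using h_mono[of r x0 \<beta>] True r b x by simp
    then have "\<beta> * E - x0 \<ge> 0" unfolding bE by simp
    then show ?thesis by (rule mult_nonpos_nonneg[OF sg1[OF True]])
  next
    case False
    have "\<beta> * exp (- r * \<beta>) \<le> x0 * exp (- r * x0)" using h_mono[of r \<beta> x0] False r b x by simp
    then have "\<beta> * E - x0 \<le> 0" unfolding bE by (simp add: mult_nonpos_nonneg mult_le_0_iff)
    moreover have "(g - 1) / (\<alpha> - 1) \<ge> 0" using sg2 False by force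
    ultimately show ?thesis using mult_nonneg_nonpos by blast
  qed
  have "\<beta> * f_alpha \<alpha> g \<le> \<beta> * ((E - 1) * (g - 1) / (\<alpha> - 1))"
    using mult_left_mono[OF fg b(1)] .
  then show "\<beta> * f_alpha \<alpha> g + (g - 1) * (\<beta> - x0) / (\<alpha> - 1) \<le> 0"
    using eq second by linarith
  assume g1: "g \<noteq> 1"
  show "\<beta> * f_alpha \<alpha> g + (g - 1) * (\<beta> - x0) / (\<alpha> - 1) < 0"
  proof (cases "\<beta> > 0")
    case True
    have "\<beta> * f_alpha \<alpha> g < \<beta> * ((E - 1) * (g - 1) / (\<alpha> - 1))"
      using mult_strict_left_mono[OF fgs[OF g1] True] .
    then show ?thesis using eq second by linarith
  next
    case False
    then have b0: "\<beta> = 0" using b by simp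
    then have "x0 \<noteq> 0" using g1 unfolding g_def by auto
    then have "\<beta> < x0" using b0 x by simp
    then have "(g - 1) / (\<alpha> - 1) > 0" by (rule sg2)
    moreover have "(g - 1) * (\<beta> - x0) / (\<alpha> - 1) = - x0 * ((g - 1) / (\<alpha> - 1))" using b0 by simp
    moreover have "x0 * ((g - 1) / (\<alpha> - 1)) > 0" using calculation(1) \<open>\<beta> < x0\<close> b0 mult_pos_pos by blast
    ultimately show ?thesis using b0 by (simp add: mult.commute)
  qed
qed


theorem mainTheorem8:
  fixes \<nu> :: "'y measure" and T :: "'t measure"
    and k :: "'t \<Rightarrow> 'y \<Rightarrow> real" and p :: "'y \<Rightarrow> real"
    and \<alpha> \<eta> \<kappa> \<kappa>' :: real and \<mu> :: "'t measure" and D :: "real set"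
  assumes sf: "sigma_finite_measure \<nu>"
    and k_meas: "(\<lambda>(\<theta>, y). k \<theta> y) \<in> borel_measurable (T \<Otimes>\<^sub>M \<nu>)"
    and k_int: "\<And>\<theta>. \<theta> \<in> space T \<Longrightarrow> (\<integral>\<^sup>+ y. ennreal (k \<theta> y) \<partial>\<nu>) = 1"
    and p_meas: "p \<in> borel_measurable \<nu>"
    and A1_k: "\<And>\<theta> y. k \<theta> y > 0"
    and A1_p: "\<And>y. p y > 0"
    and A1_pint: "(\<integral>\<^sup>+ y. ennreal (p y) \<partial>\<nu>) < \<infinity>"
    and D_interval: "is_interval D"
    and D_mem: "\<And>\<mu>' \<theta>. prob_space \<mu>' \<Longrightarrow> sets \<mu>' = sets T \<Longrightarrow> \<theta> \<in> space T \<Longrightarrow>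
         (bfun \<nu> k p \<alpha> \<mu>' \<theta> + 1 / (\<alpha> - 1)) / ((\<alpha> - 1) * (mub \<nu> k p \<alpha> \<mu>' + \<kappa>) + 1) + \<kappa>' \<in> D
       \<and> (mub \<nu> k p \<alpha> \<mu>' + 1 / (\<alpha> - 1)) / ((\<alpha> - 1) * (mub \<nu> k p \<alpha> \<mu>' + \<kappa>) + 1) + \<kappa>' \<in> D"
    and A4: "\<And>v. v \<in> D \<Longrightarrow> 1 - \<eta> * (\<alpha> - 1) * (v - \<kappa>') \<ge> 0"
    and alpha: "\<alpha> \<noteq> 1" and eta: "\<eta> > 0" and kappa: "(\<alpha> - 1) * \<kappa> \<ge> 0"
    and mu_prob: "prob_space \<mu>" and mu_sets: "sets \<mu> = sets T"
    and Psi_fin: "Psi \<nu> k p \<alpha> \<mu> < \<infinity>"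
    and Z_pos: "0 < (\<integral>\<^sup>+ \<theta>. ennreal (exp (- \<eta> * (bfun \<nu> k p \<alpha> \<mu> \<theta> + 1 / (\<alpha> - 1))
                    / ((\<alpha> - 1) * (mub \<nu> k p \<alpha> \<mu> + \<kappa>) + 1))) \<partial>\<mu>)"
    and Z_fin: "(\<integral>\<^sup>+ \<theta>. ennreal (exp (- \<eta> * (bfun \<nu> k p \<alpha> \<mu> \<theta> + 1 / (\<alpha> - 1))
                    / ((\<alpha> - 1) * (mub \<nu> k p \<alpha> \<mu> + \<kappa>) + 1))) \<partial>\<mu>) < \<infinity>"
  shows "Psi \<nu> k p \<alpha> (IAR \<nu> k p \<alpha> \<eta> \<kappa> \<mu>) \<le> Psi \<nu> k p \<alpha> \<mu>
       \<and> (Psi \<nu> k p \<alpha> (IAR \<nu> k p \<alpha> \<eta> \<kappa> \<mu>) = Psi \<nu> k p \<alpha> \<mu> \<longleftrightarrow> IAR \<nu> k p \<alpha> \<eta> \<kappa> \<mu> = \<mu>)"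
proof -
  interpret \<mu>: prob_space \<mu> by fact
  interpret \<nu>: sigma_finite_measure \<nu> by fact
  interpret P: pair_sigma_finite \<nu> \<mu> by unfold_locales
  have sp: "space \<mu> = space T" using mu_sets by (rule sets_eq_imp_space_eq)
  have km1[measurable]: "(\<lambda>x. k (fst x) (snd x)) \<in> borel_measurable (\<mu> \<Otimes>\<^sub>M \<nu>)"
  proof -
    have "sets (\<mu> \<Otimes>\<^sub>M \<nu>) = sets (T \<Otimes>\<^sub>M \<nu>)" by (rule sets_pair_measure_cong[OF mu_sets refl])
    then have e: "measurable (\<mu> \<Otimes>\<^sub>M \<nu>) (borel::real measure) = measurable (T \<Otimes>\<^sub>M \<nu>) borel"
      by (rule measurable_cong_sets) simp
    show ?thesis unfolding e using k_meas by (simp add: case_prod_beta')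
  qed
  have km2[measurable]: "(\<lambda>x. k (snd x) (fst x)) \<in> borel_measurable (\<nu> \<Otimes>\<^sub>M \<mu>)"
    using measurable_pair_swap[OF km1] by simp
  have kmt[measurable]: "(\<lambda>\<theta>. k \<theta> y) \<in> borel_measurable \<mu>" if "y \<in> space \<nu>" for y
    using measurable_compose[OF measurable_Pair2'[of y \<nu> \<mu>] km1] that by simp
  have kmy[measurable]: "k \<theta> \<in> borel_measurable \<nu>" if "\<theta> \<in> space \<mu>" for \<theta>
    using measurable_compose[OF measurable_Pair1'[of \<theta> \<mu> \<nu>] km1] that by simp
  have [measurable]: "p \<in> borel_measurable \<nu>" by fact
  have Mmix[measurable]: "mix \<mu> k \<in> borel_measurable \<nu>"
    unfolding mix_def[abs_def] by measurable
  define M where "M = mix \<mu> k"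
  have Mm[measurable]: "M \<in> borel_measurable \<nu>" unfolding M_def by measurable
  define B where "B = bfun \<nu> k p \<alpha> \<mu>"
  have Bm[measurable]: "B \<in> borel_measurable \<mu>"
    unfolding B_def bfun_def[abs_def] f_alpha'_def by measurable
  define u where "u y = M y / p y" for y
  have um[measurable]: "u \<in> borel_measurable \<nu>" unfolding u_def[abs_def] by measurable
  define mb where "mb = mub \<nu> k p \<alpha> \<mu>"
  define \<gamma> where "\<gamma> = (\<alpha> - 1) * (mb + \<kappa>) + 1"
  define w where "w \<theta> = exp (- \<eta> * B \<theta> / \<gamma>)" for \<theta>
  define Zr where "Zr = (\<integral>\<theta>. w \<theta> \<partial>\<mu>)"
  define g where "g \<theta> = w \<theta> / Zr" for \<theta>
  have gm[measurable]: "g \<in> borel_measurable \<mu>" unfolding g_def[abs_def] w_def[abs_def] by measurable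
  have IAR_eq: "IAR \<nu> k p \<alpha> \<eta> \<kappa> \<mu> = density \<mu> (\<lambda>\<theta>. ennreal (g \<theta>))"
    unfolding IAR_def Let_def g_def w_def Zr_def B_def \<gamma>_def mb_def ..
  define \<beta> where "\<beta> \<theta> = (\<alpha> - 1) * B \<theta> + 1" for \<theta>
  have k_nn: "0 \<le> k \<theta> y" for \<theta> y using A1_k[of \<theta> y] by simp
  have k_integrable: "integrable \<nu> (k \<theta>)" and k_integral: "(\<integral>y. k \<theta> y \<partial>\<nu>) = 1"
    if "\<theta> \<in> space \<mu>" for \<theta>
  proof -
    have nn: "(\<integral>\<^sup>+ y. ennreal (k \<theta> y) \<partial>\<nu>) = 1" using k_int that sp by simp
    show ki: "integrable \<nu> (k \<theta>)"
      by (rule integrableI_nonneg) (use that nn k_nn in auto)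
    have "ennreal (\<integral>y. k \<theta> y \<partial>\<nu>) = 1"
      using nn_integral_eq_integral[OF ki] nn k_nn by simp
    then show "(\<integral>y. k \<theta> y \<partial>\<nu>) = 1" by simp
  qed
  have Bu: "B \<theta> = (\<integral>y. k \<theta> y * f_alpha' \<alpha> (u y) \<partial>\<nu>)" for \<theta>
    by (simp add: B_def bfun_def u_def M_def)
  have f'pow: "(\<alpha> - 1) * f_alpha' \<alpha> x + 1 = x powr (\<alpha> - 1)" for x
    using alpha by (simp add: f_alpha'_def)
  have M_nn: "0 \<le> M y" for y unfolding M_def mix_def using k_nn by (simp add: Bochner_Integration.integral_nonneg)
  have u_nn: "0 \<le> u y" for y unfolding u_def using M_nn[of y] A1_p[of y] by simp
  have beta_nn: "0 \<le> \<beta> \<theta>" if th: "\<theta> \<in> space \<mu>" for \<theta>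
  proof (cases "integrable \<nu> (\<lambda>y. k \<theta> y * f_alpha' \<alpha> (u y))")
    case True
    have "\<beta> \<theta> = (\<integral>y. (\<alpha> - 1) * (k \<theta> y * f_alpha' \<alpha> (u y)) + k \<theta> y \<partial>\<nu>)"
      unfolding \<beta>_def Bu using True k_integrable[OF th] k_integral[OF th] by simp
    also have "\<dots> = (\<integral>y. k \<theta> y * u y powr (\<alpha> - 1) \<partial>\<nu>)"
      by (rule Bochner_Integration.integral_cong[OF refl]) (simp add: f'pow[symmetric] algebra_simps)
    also have "\<dots> \<ge> 0" using k_nn by (simp add: Bochner_Integration.integral_nonneg)
    finally show ?thesis by simp
  next
    case False
    then show ?thesis unfolding \<beta>_def Bu by (simp add: not_integrable_integral_eq)
  qed
  have gamma_nn: "\<gamma> \<ge> 0"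
  proof (cases "integrable \<mu> B")
    case True
    have "(\<alpha> - 1) * mb + 1 = (\<integral>\<theta>. \<beta> \<theta> \<partial>\<mu>)"
      unfolding mb_def \<beta>_def using True by (simp add: B_def mub_def \<mu>.prob_space)
    also have "\<dots> \<ge> 0" using beta_nn by (simp add: Bochner_Integration.integral_nonneg)
    finally show ?thesis unfolding \<gamma>_def using kappa by (simp add: algebra_simps)
  next
    case False
    then have "mb = 0" unfolding mb_def mub_def B_def[symmetric] by (simp add: not_integrable_integral_eq)
    then show ?thesis unfolding \<gamma>_def using kappa by (simp add: algebra_simps)
  qed
  show ?thesis
  proof (cases "\<gamma> = 0")
    case True
    have w1: "w = (\<lambda>_. 1)" unfolding w_def True by simp
    then have "g \<theta> = 1" for \<theta> unfolding g_def Zr_def w1 by (simp add: \<mu>.prob_space)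
    then have "IAR \<nu> k p \<alpha> \<eta> \<kappa> \<mu> = \<mu>" unfolding IAR_eq by (simp add: density_1)
    then show ?thesis by simp
  next
    case False
    then have gpos: "\<gamma> > 0" using gamma_nn by simp
    define r where "r = \<eta> / \<gamma>"
    have rpos: "r > 0" unfolding r_def using gpos eta by simp
    have rbeta: "r * \<beta> \<theta> \<le> 1" if th: "\<theta> \<in> space \<mu>" for \<theta>
    proof -
      have "(B \<theta> + 1 / (\<alpha> - 1)) / \<gamma> + \<kappa>' \<in> D"
        using D_mem[OF mu_prob mu_sets, of \<theta>] th sp unfolding B_def \<gamma>_def mb_def by simp
      from A4[OF this] have "1 - \<eta> * (\<alpha> - 1) * ((B \<theta> + 1 / (\<alpha> - 1)) / \<gamma>) \<ge> 0" by simp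
      moreover have "\<eta> * (\<alpha> - 1) * ((B \<theta> + 1 / (\<alpha> - 1)) / \<gamma>) = r * \<beta> \<theta>"
      proof -
        have a1: "(\<alpha> - 1) * (B \<theta> + 1 / (\<alpha> - 1)) = \<beta> \<theta>"
          unfolding \<beta>_def using alpha by (simp add: distrib_left)
        have "\<eta> * (\<alpha> - 1) * ((B \<theta> + 1 / (\<alpha> - 1)) / \<gamma>) = \<eta> * ((\<alpha> - 1) * (B \<theta> + 1 / (\<alpha> - 1))) / \<gamma>"
          by simp
        then show ?thesis unfolding a1 r_def by simp
      qed
      ultimately show ?thesis by simp
    qed
    have w_eq: "w \<theta> = exp (- (r * \<beta> \<theta> - r) / (\<alpha> - 1))" for \<theta>
    proof -
      have "r * \<beta> \<theta> - r = (\<alpha> - 1) * (r * B \<theta>)" unfolding \<beta>_def by (simp add: algebra_simps)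
      then have "(r * \<beta> \<theta> - r) / (\<alpha> - 1) = \<eta> * B \<theta> / \<gamma>" using alpha unfolding r_def by simp
      then have "(r - r * \<beta> \<theta>) / (\<alpha> - 1) = - (\<eta> * B \<theta> / \<gamma>)" by (metis minus_diff_eq minus_divide_left)
      then show ?thesis unfolding w_def by simp
    qed
    define e0 where "e0 = r / (\<alpha> - 1)"
    define e1 where "e1 = (r - 1) / (\<alpha> - 1)"
    define lo where "lo = min e0 e1"
    define hi where "hi = max e0 e1"
    have cvx: "lo \<le> - (s - r) / (\<alpha> - 1) \<and> - (s - r) / (\<alpha> - 1) \<le> hi" if "0 \<le> s" "s \<le> 1" for s
    proof -
      have d: "e1 - e0 = - 1 / (\<alpha> - 1)" unfolding e0_def e1_def by (simp add: diff_divide_distrib[symmetric])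
      have e: "- (s - r) / (\<alpha> - 1) = e0 + s * (e1 - e0)" unfolding d unfolding e0_def
        by (simp add: diff_divide_distrib[symmetric] add_divide_distrib[symmetric])
      show ?thesis
      proof (cases "e0 \<le> e1")
        case True
        then have "0 \<le> s * (e1 - e0)" "s * (e1 - e0) \<le> e1 - e0" using that by (simp_all add: mult_left_le_one_le)
        then show ?thesis unfolding e lo_def hi_def using True by simp
      next
        case False
        have f1: "s * (e1 - e0) \<le> 0" using that False by (simp add: mult_nonneg_nonpos)
        have f2: "e1 - e0 \<le> s * (e1 - e0)" using that False mult_left_mono[of s 1 "e0 - e1"] by simp
        have "lo = e1" "hi = e0" using False by (auto simp: lo_def hi_def)
        then show ?thesis unfolding e using f1 f2 by linarith
      qed
    qed
    have w_bd: "exp lo \<le> w \<theta> \<and> w \<theta> \<le> exp hi" if "\<theta> \<in> space \<mu>" for \<theta>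
      using cvx[of "r * \<beta> \<theta>"] beta_nn[OF that] rbeta[OF that] rpos unfolding w_eq by simp
    have wm[measurable]: "w \<in> borel_measurable \<mu>" unfolding w_def[abs_def] by measurable
    have w_pos: "w \<theta> > 0" for \<theta> unfolding w_def by simp
    have w_int: "integrable \<mu> w"
      by (rule \<mu>.integrable_const_bound[where B="exp hi"]) (use w_bd w_pos in \<open>auto intro!: AE_I2 simp: abs_of_pos\<close>)
    have Zr_bd: "exp lo \<le> Zr \<and> Zr \<le> exp hi"
    proof
      have "(\<integral>\<theta>. exp lo \<partial>\<mu>) \<le> Zr" unfolding Zr_def
        by (rule integral_mono[OF _ w_int]) (use w_bd in auto)
      then show "exp lo \<le> Zr" by (simp add: \<mu>.prob_space)
      have "Zr \<le> (\<integral>\<theta>. exp hi \<partial>\<mu>)" unfolding Zr_def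
        by (rule integral_mono[OF w_int]) (use w_bd in auto)
      then show "Zr \<le> exp hi" by (simp add: \<mu>.prob_space)
    qed
    have Zr_pos: "Zr > 0" using Zr_bd by (meson exp_gt_zero less_le_trans)
    have lnZ: "lo \<le> ln Zr \<and> ln Zr \<le> hi" using Zr_bd Zr_pos
      by (metis exp_gt_zero exp_le_cancel_iff exp_ln)
    define s0 where "s0 = r - (\<alpha> - 1) * ln Zr"
    have s0_bd: "0 \<le> s0 \<and> s0 \<le> 1"
    proof (cases "\<alpha> > 1")
      case True
      then have "e1 \<le> e0" unfolding e0_def e1_def by (simp add: divide_right_mono)
      then have "(r - 1) / (\<alpha> - 1) \<le> ln Zr" "ln Zr \<le> r / (\<alpha> - 1)"
        using lnZ unfolding lo_def hi_def e0_def e1_def by auto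
      then have "r - 1 \<le> (\<alpha> - 1) * ln Zr" "(\<alpha> - 1) * ln Zr \<le> r" using True
        by (simp_all add: pos_divide_le_eq pos_le_divide_eq mult.commute)
      then show ?thesis unfolding s0_def by simp
    next
      case False
      then have a1: "\<alpha> < 1" using alpha by simp
      then have "e0 \<le> e1" unfolding e0_def e1_def by (simp add: divide_right_mono_neg)
      then have "r / (\<alpha> - 1) \<le> ln Zr" "ln Zr \<le> (r - 1) / (\<alpha> - 1)"
        using lnZ unfolding lo_def hi_def e0_def e1_def by auto
      then have "(\<alpha> - 1) * ln Zr \<le> r" "r - 1 \<le> (\<alpha> - 1) * ln Zr" using a1
        by (simp_all add: neg_divide_le_eq neg_le_divide_eq mult.commute)
      then show ?thesis unfolding s0_def by simp
    qed
    define x0 where "x0 = s0 / r"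
    have x0_bd: "0 \<le> x0" "r * x0 \<le> 1" unfolding x0_def using s0_bd rpos by auto
    have g_eq: "g \<theta> = exp (- r * (\<beta> \<theta> - x0) / (\<alpha> - 1))" for \<theta>
    proof -
      have "g \<theta> = exp (- (r * \<beta> \<theta> - r) / (\<alpha> - 1)) / exp (ln Zr)"
        unfolding g_def w_eq using Zr_pos by simp
      also have "\<dots> = exp (- (r * \<beta> \<theta> - r) / (\<alpha> - 1) - ln Zr)" by (simp add: exp_diff)
      also have "- (r * \<beta> \<theta> - r) / (\<alpha> - 1) - ln Zr = - r * (\<beta> \<theta> - x0) / (\<alpha> - 1)"
        unfolding x0_def s0_def using rpos alpha by (simp add: field_simps)
      finally show ?thesis .
    qed
    define L where "L = 1 / \<bar>\<alpha> - 1\<bar>"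
    have g_bd: "exp (- L) \<le> g \<theta> \<and> g \<theta> \<le> exp L" if th: "\<theta> \<in> space \<mu>" for \<theta>
    proof -
      have "\<bar>r * \<beta> \<theta> - r * x0\<bar> \<le> 1" using beta_nn[OF th] rbeta[OF th] x0_bd rpos
        by (smt (verit) mult_nonneg_nonneg)
      then have t: "\<bar>- r * (\<beta> \<theta> - x0) / (\<alpha> - 1)\<bar> \<le> L"
        unfolding L_def by (simp add: abs_divide abs_mult right_diff_distrib divide_right_mono)
      have "- L \<le> - r * (\<beta> \<theta> - x0) / (\<alpha> - 1)" using abs_le_D2[OF t] by linarith
      moreover have "- r * (\<beta> \<theta> - x0) / (\<alpha> - 1) \<le> L" using abs_le_D1[OF t] .
      ultimately show ?thesis unfolding g_eq by simp
    qed
    have g_pos: "g \<theta> > 0" for \<theta> unfolding g_eq by simp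
    have g_int: "integrable \<mu> g"
      by (rule \<mu>.integrable_const_bound[where B="exp L"]) (use g_bd g_pos in \<open>auto intro!: AE_I2 simp: less_imp_le\<close>)
    have g_int1: "(\<integral>\<theta>. g \<theta> \<partial>\<mu>) = 1"
      unfolding g_def Zr_def using Zr_pos Zr_def by simp
    have nnF: "(\<integral>\<^sup>+ y. (\<integral>\<^sup>+ \<theta>. ennreal (k \<theta> y) \<partial>\<mu>) \<partial>\<nu>) = 1"
    proof -
      have "(\<integral>\<^sup>+ y. (\<integral>\<^sup>+ \<theta>. ennreal (k \<theta> y) \<partial>\<mu>) \<partial>\<nu>) = (\<integral>\<^sup>+ \<theta>. (\<integral>\<^sup>+ y. ennreal (k \<theta> y) \<partial>\<nu>) \<partial>\<mu>)"
        by (rule P.Fubini'[symmetric]) measurable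
      also have "\<dots> = (\<integral>\<^sup>+ \<theta>. 1 \<partial>\<mu>)"
        by (rule nn_integral_cong) (use k_int sp in auto)
      finally show ?thesis by (simp add: \<mu>.emeasure_space_1)
    qed
    have AE_good: "AE y in \<nu>. integrable \<mu> (\<lambda>\<theta>. k \<theta> y) \<and> ennreal (M y) = (\<integral>\<^sup>+ \<theta>. ennreal (k \<theta> y) \<partial>\<mu>) \<and> 0 < M y"
    proof -
      have "AE y in \<nu>. (\<integral>\<^sup>+ \<theta>. ennreal (k \<theta> y) \<partial>\<mu>) \<noteq> \<infinity>"
        by (rule nn_integral_PInf_AE) (use nnF in auto)
      then show ?thesis
      proof (rule AE_mp[OF _ AE_I2[OF impI]])
        fix y assume y: "y \<in> space \<nu>" and fin: "(\<integral>\<^sup>+ \<theta>. ennreal (k \<theta> y) \<partial>\<mu>) \<noteq> \<infinity>"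
        have ki: "integrable \<mu> (\<lambda>\<theta>. k \<theta> y)"
          by (rule integrableI_nonneg) (use y fin k_nn in \<open>auto simp: less_top\<close>)
        have e: "ennreal (M y) = (\<integral>\<^sup>+ \<theta>. ennreal (k \<theta> y) \<partial>\<mu>)"
          unfolding M_def mix_def using nn_integral_eq_integral[OF ki] k_nn by simp
        have "M y \<noteq> 0"
        proof
          assume "M y = 0"
          then have "AE \<theta> in \<mu>. k \<theta> y = 0"
            using integral_nonneg_eq_0_iff_AE[OF ki] k_nn unfolding M_def mix_def by simp
          then have "AE \<theta> in \<mu>. False"
          proof eventually_elim
            case (elim \<theta>) then show False using A1_k[of \<theta> y] by simp
          qed
          then show False by (simp add: \<mu>.AE_False)
        qed
        then show "integrable \<mu> (\<lambda>\<theta>. k \<theta> y) \<and> ennreal (M y) = (\<integral>\<^sup>+ \<theta>. ennreal (k \<theta> y) \<partial>\<mu>) \<and> 0 < M y"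
          using ki e M_nn[of y] by simp
      qed
    qed
    have M_int: "integrable \<nu> M"
    proof (rule integrableI_nonneg)
      show "AE x in \<nu>. 0 \<le> M x" using M_nn by simp
      have "(\<integral>\<^sup>+ y. ennreal (M y) \<partial>\<nu>) = 1"
      proof -
        have "(\<integral>\<^sup>+ y. ennreal (M y) \<partial>\<nu>) = (\<integral>\<^sup>+ y. (\<integral>\<^sup>+ \<theta>. ennreal (k \<theta> y) \<partial>\<mu>) \<partial>\<nu>)"
          by (rule nn_integral_cong_AE) (use AE_good in \<open>eventually_elim, simp\<close>)
        then show ?thesis using nnF by simp
      qed
      then show "(\<integral>\<^sup>+ y. ennreal (M y) \<partial>\<nu>) < \<infinity>" by simp
    qed simp
    define F0 where "F0 y = f_alpha \<alpha> (u y) * p y" for y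
    have F0m[measurable]: "F0 \<in> borel_measurable \<nu>" unfolding F0_def[abs_def] f_alpha_def by measurable
    have Psi_F0: "Psi \<nu> k p \<alpha> \<mu> = (\<integral>\<^sup>+ y. ennreal (F0 y) \<partial>\<nu>)"
      by (simp add: Psi_def F0_def u_def M_def)
    have u_pos_AE: "AE y in \<nu>. 0 < u y" using AE_good by eventually_elim (simp add: u_def A1_p)
    have F0_nn: "AE y in \<nu>. 0 \<le> F0 y" using u_pos_AE
      by eventually_elim (simp add: F0_def f_nonneg alpha A1_p less_imp_le)
    have F0_int: "integrable \<nu> F0"
      by (rule integrableI_nonneg[OF F0m F0_nn]) (use Psi_fin Psi_F0 in simp)
    have Psi_eq: "Psi \<nu> k p \<alpha> \<mu> = ennreal (\<integral>y. F0 y \<partial>\<nu>)"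
      unfolding Psi_F0 by (rule nn_integral_eq_integral[OF F0_int F0_nn])
    have p_int: "integrable \<nu> p"
      by (rule integrableI_nonneg) (use A1_pint A1_p less_imp_le in auto)
    have Pa_int: "integrable \<nu> (\<lambda>y. p y * u y powr \<alpha>)"
    proof (cases "\<alpha> = 0")
      case True
      show ?thesis
        by (rule integrable_cong_AE_imp[OF p_int]) (use u_pos_AE True in \<open>auto\<close>)
    next
      case False
      have "integrable \<nu> (\<lambda>y. \<alpha> * (\<alpha> - 1) * F0 y + (1 - \<alpha>) * p y + \<alpha> * M y)"
        using F0_int p_int M_int by auto
      then show ?thesis
      proof (rule integrable_cong_AE_imp)
        show "AE y in \<nu>. \<alpha> * (\<alpha> - 1) * F0 y + (1 - \<alpha>) * p y + \<alpha> * M y = p y * u y powr \<alpha>"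
          using u_pos_AE
        proof eventually_elim
          case (elim y)
          have pu: "M y = p y * u y" unfolding u_def using A1_p[of y] by simp
          show ?case unfolding F0_def f_alpha_def pu using False alpha
            by (simp add: field_simps)
        qed
      qed simp
    qed
    have int_c: "integrable (\<nu> \<Otimes>\<^sub>M \<mu>) (\<lambda>(y,\<theta>). k \<theta> y * c y)"
      if cm[measurable]: "c \<in> borel_measurable \<nu>" and ci: "integrable \<nu> (\<lambda>y. M y * \<bar>c y\<bar>)" for c
    proof (rule P.Fubini_integrable)
      show "(\<lambda>(y,\<theta>). k \<theta> y * c y) \<in> borel_measurable (\<nu> \<Otimes>\<^sub>M \<mu>)" by measurable
      from ci show "integrable \<nu> (\<lambda>y. \<integral>\<theta>. norm ((\<lambda>(y,\<theta>). k \<theta> y * c y) (y,\<theta>)) \<partial>\<mu>)"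
      proof (rule integrable_cong_AE_imp)
        show "AE y in \<nu>. M y * \<bar>c y\<bar> = (\<integral>\<theta>. norm ((\<lambda>(y,\<theta>). k \<theta> y * c y) (y,\<theta>)) \<partial>\<mu>)"
          by (rule AE_I2) (simp add: abs_mult k_nn M_def mix_def)
      qed measurable
      show "AE y in \<nu>. integrable \<mu> (\<lambda>\<theta>. (\<lambda>(y,\<theta>). k \<theta> y * c y) (y,\<theta>))"
        using AE_good by eventually_elim simp
    qed
    have K_int: "integrable (\<nu> \<Otimes>\<^sub>M \<mu>) (\<lambda>(y,\<theta>). k \<theta> y * 1)"
      by (rule int_c) (use M_int in auto)
    have Hk_int: "integrable (\<nu> \<Otimes>\<^sub>M \<mu>) (\<lambda>(y,\<theta>). k \<theta> y * u y powr (\<alpha> - 1))"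
    proof (rule int_c)
      show "integrable \<nu> (\<lambda>y. M y * \<bar>u y powr (\<alpha> - 1)\<bar>)"
        using Pa_int
      proof (rule integrable_cong_AE_imp)
        show "AE y in \<nu>. p y * u y powr \<alpha> = M y * \<bar>u y powr (\<alpha> - 1)\<bar>"
          using u_pos_AE
        proof eventually_elim
          case (elim y)
          have pu: "M y = p y * u y" unfolding u_def using A1_p[of y] by simp
          have "u y * u y powr (\<alpha> - 1) = u y powr \<alpha>" using elim by (simp add: powr_mult_base)
          then show ?case unfolding pu by (simp add: mult.assoc)
        qed
      qed measurable
    qed measurable
    have H1_int: "integrable (\<nu> \<Otimes>\<^sub>M \<mu>) (\<lambda>(y,\<theta>). k \<theta> y * (F0 y / M y))"
    proof (rule int_c)
      show "integrable \<nu> (\<lambda>y. M y * \<bar>F0 y / M y\<bar>)"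
        using integrable_abs[OF F0_int]
      proof (rule integrable_cong_AE_imp)
        show "AE y in \<nu>. \<bar>F0 y\<bar> = M y * \<bar>F0 y / M y\<bar>"
          using AE_good by eventually_elim (simp add: abs_divide)
      qed measurable
    qed measurable
    obtain Cf where Cf: "\<And>x. x \<in> {exp (- L)..exp L} \<Longrightarrow> \<bar>f_alpha \<alpha> x\<bar> \<le> Cf"
    proof -
      have "continuous_on {exp (- L)..exp L} (f_alpha \<alpha>)"
      proof (rule continuous_at_imp_continuous_on, rule ballI)
        fix x assume "x \<in> {exp (- L)..exp L}"
        then have "x > 0" by (meson atLeastAtMost_iff exp_gt_zero less_le_trans)
        then show "isCont (f_alpha \<alpha>) x" using f_deriv[of x \<alpha>] alpha DERIV_isCont by blast
      qed
      then have "compact (f_alpha \<alpha> ` {exp (- L)..exp L})" by (rule compact_continuous_image[OF _ compact_Icc])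
      then obtain C where "\<forall>z \<in> f_alpha \<alpha> ` {exp (- L)..exp L}. norm z \<le> C"
        using compact_imp_bounded bounded_iff by blast
      then show ?thesis using that[of C] by simp
    qed
    have fg_bd: "\<bar>f_alpha \<alpha> (g \<theta>)\<bar> \<le> Cf" if "\<theta> \<in> space \<mu>" for \<theta> using Cf g_bd[OF that] by simp
    have g1_bd: "\<bar>g \<theta> - 1\<bar> \<le> exp L + 1" if "\<theta> \<in> space \<mu>" for \<theta> using g_bd[OF that] g_pos[of \<theta>] by (simp add: abs_le_iff)
    have H2_int: "integrable (\<nu> \<Otimes>\<^sub>M \<mu>) (\<lambda>(y,\<theta>). k \<theta> y * u y powr (\<alpha> - 1) * f_alpha \<alpha> (g \<theta>))"
    proof (rule Bochner_Integration.integrable_bound)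
      show "integrable (\<nu> \<Otimes>\<^sub>M \<mu>) (\<lambda>x. Cf * (case x of (y,\<theta>) \<Rightarrow> k \<theta> y * u y powr (\<alpha> - 1)))"
        using Hk_int by simp
      show "(\<lambda>(y,\<theta>). k \<theta> y * u y powr (\<alpha> - 1) * f_alpha \<alpha> (g \<theta>)) \<in> borel_measurable (\<nu> \<Otimes>\<^sub>M \<mu>)"
        unfolding f_alpha_def by measurable
      show "AE x in \<nu> \<Otimes>\<^sub>M \<mu>. norm ((\<lambda>(y,\<theta>). k \<theta> y * u y powr (\<alpha> - 1) * f_alpha \<alpha> (g \<theta>)) x)
            \<le> norm (Cf * (case x of (y,\<theta>) \<Rightarrow> k \<theta> y * u y powr (\<alpha> - 1)))"
      proof (rule AE_I2)
        fix x assume x: "x \<in> space (\<nu> \<Otimes>\<^sub>M \<mu>)"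
        obtain y \<theta> where xe: "x = (y, \<theta>)" by (cases x)
        have th: "\<theta> \<in> space \<mu>" using x xe by (simp add: space_pair_measure)
        have nn: "0 \<le> k \<theta> y * u y powr (\<alpha> - 1)" using k_nn by simp
        have "\<bar>k \<theta> y * u y powr (\<alpha> - 1) * f_alpha \<alpha> (g \<theta>)\<bar> = (k \<theta> y * u y powr (\<alpha> - 1)) * \<bar>f_alpha \<alpha> (g \<theta>)\<bar>"
          using nn k_nn[of \<theta> y] by (simp add: abs_mult)
        also have "\<dots> \<le> (k \<theta> y * u y powr (\<alpha> - 1)) * Cf" using fg_bd[OF th] nn by (rule mult_left_mono)
        also have "\<dots> \<le> \<bar>Cf * (k \<theta> y * u y powr (\<alpha> - 1))\<bar>" by (simp add: mult.commute)
        finally show "norm ((\<lambda>(y,\<theta>). k \<theta> y * u y powr (\<alpha> - 1) * f_alpha \<alpha> (g \<theta>)) x)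
            \<le> norm (Cf * (case x of (y,\<theta>) \<Rightarrow> k \<theta> y * u y powr (\<alpha> - 1)))" using xe by simp
      qed
    qed
    have H3_int: "integrable (\<nu> \<Otimes>\<^sub>M \<mu>) (\<lambda>(y,\<theta>). k \<theta> y * f_alpha' \<alpha> (u y) * (g \<theta> - 1))"
    proof (rule Bochner_Integration.integrable_bound)
      show "integrable (\<nu> \<Otimes>\<^sub>M \<mu>) (\<lambda>x. (exp L + 1) / \<bar>\<alpha> - 1\<bar> * ((case x of (y,\<theta>) \<Rightarrow> k \<theta> y * u y powr (\<alpha> - 1)) + (case x of (y,\<theta>) \<Rightarrow> k \<theta> y * 1)))"
        using Hk_int K_int by simp
      show "(\<lambda>(y,\<theta>). k \<theta> y * f_alpha' \<alpha> (u y) * (g \<theta> - 1)) \<in> borel_measurable (\<nu> \<Otimes>\<^sub>M \<mu>)"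
        unfolding f_alpha'_def by measurable
      show "AE x in \<nu> \<Otimes>\<^sub>M \<mu>. norm ((\<lambda>(y,\<theta>). k \<theta> y * f_alpha' \<alpha> (u y) * (g \<theta> - 1)) x)
            \<le> norm ((exp L + 1) / \<bar>\<alpha> - 1\<bar> * ((case x of (y,\<theta>) \<Rightarrow> k \<theta> y * u y powr (\<alpha> - 1)) + (case x of (y,\<theta>) \<Rightarrow> k \<theta> y * 1)))"
      proof (rule AE_I2)
        fix x assume x: "x \<in> space (\<nu> \<Otimes>\<^sub>M \<mu>)"
        obtain y \<theta> where xe: "x = (y, \<theta>)" by (cases x)
        have th: "\<theta> \<in> space \<mu>" using x xe by (simp add: space_pair_measure)
        have f'b: "\<bar>f_alpha' \<alpha> (u y)\<bar> \<le> (u y powr (\<alpha> - 1) + 1) / \<bar>\<alpha> - 1\<bar>"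
          unfolding f_alpha'_def abs_divide by (rule divide_right_mono) (use powr_ge_zero[of "u y" "\<alpha> - 1"] in \<open>auto simp: abs_le_iff\<close>)
        have "\<bar>k \<theta> y * f_alpha' \<alpha> (u y) * (g \<theta> - 1)\<bar> = k \<theta> y * \<bar>f_alpha' \<alpha> (u y)\<bar> * \<bar>g \<theta> - 1\<bar>"
          using k_nn by (simp add: abs_mult)
        also have "\<dots> \<le> k \<theta> y * ((u y powr (\<alpha> - 1) + 1) / \<bar>\<alpha> - 1\<bar>) * (exp L + 1)"
          by (intro mult_mono mult_left_mono f'b g1_bd[OF th]) (auto simp: k_nn)
        also have "\<dots> = (exp L + 1) / \<bar>\<alpha> - 1\<bar> * (k \<theta> y * u y powr (\<alpha> - 1) + k \<theta> y * 1)"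
          by (simp add: field_simps)
        also have "\<dots> \<le> \<bar>(exp L + 1) / \<bar>\<alpha> - 1\<bar> * (k \<theta> y * u y powr (\<alpha> - 1) + k \<theta> y * 1)\<bar>" by (rule abs_ge_self)
        finally show "norm ((\<lambda>(y,\<theta>). k \<theta> y * f_alpha' \<alpha> (u y) * (g \<theta> - 1)) x)
            \<le> norm ((exp L + 1) / \<bar>\<alpha> - 1\<bar> * ((case x of (y,\<theta>) \<Rightarrow> k \<theta> y * u y powr (\<alpha> - 1)) + (case x of (y,\<theta>) \<Rightarrow> k \<theta> y * 1)))"
          using xe by simp
      qed
    qed
    have betam[measurable]: "\<beta> \<in> borel_measurable \<mu>" unfolding \<beta>_def[abs_def] by measurable
    have fgm[measurable]: "(\<lambda>\<theta>. f_alpha \<alpha> (g \<theta>)) \<in> borel_measurable \<mu>" unfolding f_alpha_def by measurable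
    define h1 where "h1 y \<theta> = k \<theta> y * (F0 y / M y)" for y \<theta>
    define h2 where "h2 y \<theta> = k \<theta> y * u y powr (\<alpha> - 1) * f_alpha \<alpha> (g \<theta>)" for y \<theta>
    define h3 where "h3 y \<theta> = k \<theta> y * f_alpha' \<alpha> (u y) * (g \<theta> - 1)" for y \<theta>
    define h where "h y \<theta> = h1 y \<theta> + h2 y \<theta> + h3 y \<theta>" for y \<theta>
    have h1i: "integrable (\<nu> \<Otimes>\<^sub>M \<mu>) (case_prod h1)" using H1_int unfolding h1_def by simp
    have h2i: "integrable (\<nu> \<Otimes>\<^sub>M \<mu>) (case_prod h2)" using H2_int unfolding h2_def by simp
    have h3i: "integrable (\<nu> \<Otimes>\<^sub>M \<mu>) (case_prod h3)" using H3_int unfolding h3_def by simp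
    have hi: "integrable (\<nu> \<Otimes>\<^sub>M \<mu>) (case_prod h)"
    proof -
      have "integrable (\<nu> \<Otimes>\<^sub>M \<mu>) (\<lambda>x. case_prod h1 x + case_prod h2 x + case_prod h3 x)"
        using h1i h2i h3i by auto
      then show ?thesis unfolding h_def by (simp add: case_prod_beta')
    qed
    have Iall: "(\<integral>x. case_prod h x \<partial>(\<nu> \<Otimes>\<^sub>M \<mu>)) = (\<integral>x. case_prod h1 x \<partial>(\<nu> \<Otimes>\<^sub>M \<mu>))
       + (\<integral>x. case_prod h2 x \<partial>(\<nu> \<Otimes>\<^sub>M \<mu>)) + (\<integral>x. case_prod h3 x \<partial>(\<nu> \<Otimes>\<^sub>M \<mu>))"
    proof -
      have "(\<integral>x. case_prod h x \<partial>(\<nu> \<Otimes>\<^sub>M \<mu>)) = (\<integral>x. case_prod h1 x + case_prod h2 x + case_prod h3 x \<partial>(\<nu> \<Otimes>\<^sub>M \<mu>))"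
        unfolding h_def by (simp add: case_prod_beta')
      also have "\<dots> = (\<integral>x. case_prod h1 x \<partial>(\<nu> \<Otimes>\<^sub>M \<mu>))
       + (\<integral>x. case_prod h2 x \<partial>(\<nu> \<Otimes>\<^sub>M \<mu>)) + (\<integral>x. case_prod h3 x \<partial>(\<nu> \<Otimes>\<^sub>M \<mu>))"
        using h1i h2i h3i by simp
      finally show ?thesis .
    qed
    have I1: "(\<integral>x. case_prod h1 x \<partial>(\<nu> \<Otimes>\<^sub>M \<mu>)) = (\<integral>y. F0 y \<partial>\<nu>)"
    proof -
      have "(\<integral>x. case_prod h1 x \<partial>(\<nu> \<Otimes>\<^sub>M \<mu>)) = (\<integral>y. (\<integral>\<theta>. h1 y \<theta> \<partial>\<mu>) \<partial>\<nu>)"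
        using P.integral_fst[OF h1i] by simp
      also have "\<dots> = (\<integral>y. F0 y \<partial>\<nu>)"
      proof (rule integral_cong_AE)
        show "AE y in \<nu>. (\<integral>\<theta>. h1 y \<theta> \<partial>\<mu>) = F0 y"
          using AE_good by eventually_elim (simp add: h1_def M_def mix_def)
      qed (use P.integrable_fst[OF h1i] in \<open>auto\<close>)
      finally show ?thesis .
    qed
    define Qf where "Qf \<theta> = \<beta> \<theta> * f_alpha \<alpha> (g \<theta>) + (g \<theta> - 1) * (\<beta> \<theta> - x0) / (\<alpha> - 1)" for \<theta>
    have I23: "(\<integral>x. case_prod h2 x \<partial>(\<nu> \<Otimes>\<^sub>M \<mu>)) + (\<integral>x. case_prod h3 x \<partial>(\<nu> \<Otimes>\<^sub>M \<mu>)) = (\<integral>\<theta>. Qf \<theta> \<partial>\<mu>)"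
      and Qf_int: "integrable \<mu> Qf"
    proof -
      have AEb: "AE \<theta> in \<mu>. (\<integral>y. h2 y \<theta> \<partial>\<nu>) = \<beta> \<theta> * f_alpha \<alpha> (g \<theta>)"
        using P.AE_integrable_snd[OF Hk_int] AE_space
      proof eventually_elim
        case (elim \<theta>)
        have ii: "integrable \<nu> (\<lambda>y. k \<theta> y * u y powr (\<alpha> - 1))" using elim by simp
        have kin: "integrable \<nu> (k \<theta>)" and k1: "(\<integral>y. k \<theta> y \<partial>\<nu>) = 1"
          using k_integrable k_integral elim by auto
        have eqf: "(\<lambda>y. k \<theta> y * f_alpha' \<alpha> (u y)) = (\<lambda>y. (k \<theta> y * u y powr (\<alpha> - 1) - k \<theta> y) / (\<alpha> - 1))"
          using alpha by (auto simp: f_alpha'_def fun_eq_iff field_simps)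
        have "B \<theta> = ((\<integral>y. k \<theta> y * u y powr (\<alpha> - 1) \<partial>\<nu>) - 1) / (\<alpha> - 1)"
          unfolding Bu eqf using ii kin k1 by simp
        then have bb: "\<beta> \<theta> = (\<integral>y. k \<theta> y * u y powr (\<alpha> - 1) \<partial>\<nu>)"
          unfolding \<beta>_def using alpha by simp
        show ?case unfolding h2_def bb by simp
      qed
      have e3: "(\<integral>y. h3 y \<theta> \<partial>\<nu>) = B \<theta> * (g \<theta> - 1)" for \<theta>
        unfolding h3_def Bu by simp
      have i2: "integrable \<mu> (\<lambda>\<theta>. \<integral>y. h2 y \<theta> \<partial>\<nu>)" using P.integrable_snd[OF h2i] .
      have i3: "integrable \<mu> (\<lambda>\<theta>. \<integral>y. h3 y \<theta> \<partial>\<nu>)" using P.integrable_snd[OF h3i] .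
      have i2': "integrable \<mu> (\<lambda>\<theta>. \<beta> \<theta> * f_alpha \<alpha> (g \<theta>))"
        using i2 by (rule integrable_cong_AE_imp) (use AEb in auto, measurable)
      have i3': "integrable \<mu> (\<lambda>\<theta>. B \<theta> * (g \<theta> - 1))" using i3 unfolding e3 .
      have ig: "integrable \<mu> (\<lambda>\<theta>. (g \<theta> - 1) * ((1 - x0) / (\<alpha> - 1)))" using g_int by auto
      have Qf_eq: "Qf \<theta> = \<beta> \<theta> * f_alpha \<alpha> (g \<theta>) + B \<theta> * (g \<theta> - 1) + (g \<theta> - 1) * ((1 - x0) / (\<alpha> - 1))" for \<theta>
      proof -
        have "(\<beta> \<theta> - x0) / (\<alpha> - 1) = B \<theta> + (1 - x0) / (\<alpha> - 1)"
          unfolding \<beta>_def using alpha by (simp add: field_simps)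
        then have "(g \<theta> - 1) * (\<beta> \<theta> - x0) / (\<alpha> - 1) = (g \<theta> - 1) * (B \<theta> + (1 - x0) / (\<alpha> - 1))"
          by (metis times_divide_eq_right)
        also have "\<dots> = B \<theta> * (g \<theta> - 1) + (g \<theta> - 1) * ((1 - x0) / (\<alpha> - 1))" by (simp add: algebra_simps)
        finally show ?thesis unfolding Qf_def by simp
      qed
      show Qf_int: "integrable \<mu> Qf" unfolding Qf_eq using i2' i3' ig by auto
      have zero: "(\<integral>\<theta>. (g \<theta> - 1) * ((1 - x0) / (\<alpha> - 1)) \<partial>\<mu>) = 0"
        using g_int g_int1 by (simp add: \<mu>.prob_space)
      have "(\<integral>\<theta>. Qf \<theta> \<partial>\<mu>) = (\<integral>\<theta>. \<beta> \<theta> * f_alpha \<alpha> (g \<theta>) \<partial>\<mu>) + (\<integral>\<theta>. B \<theta> * (g \<theta> - 1) \<partial>\<mu>)"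
        unfolding Qf_eq using i2' i3' ig zero by simp
      also have "(\<integral>\<theta>. \<beta> \<theta> * f_alpha \<alpha> (g \<theta>) \<partial>\<mu>) = (\<integral>\<theta>. (\<integral>y. h2 y \<theta> \<partial>\<nu>) \<partial>\<mu>)"
        by (rule integral_cong_AE[symmetric]) (use AEb borel_measurable_integrable[OF i2] in auto)
      also have "\<dots> = (\<integral>x. case_prod h2 x \<partial>(\<nu> \<Otimes>\<^sub>M \<mu>))" using P.integral_snd[OF h2i] .
      also have "(\<integral>\<theta>. B \<theta> * (g \<theta> - 1) \<partial>\<mu>) = (\<integral>\<theta>. (\<integral>y. h3 y \<theta> \<partial>\<nu>) \<partial>\<mu>)" unfolding e3 ..
      also have "\<dots> = (\<integral>x. case_prod h3 x \<partial>(\<nu> \<Otimes>\<^sub>M \<mu>))" using P.integral_snd[OF h3i] .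
      finally show "(\<integral>x. case_prod h2 x \<partial>(\<nu> \<Otimes>\<^sub>M \<mu>)) + (\<integral>x. case_prod h3 x \<partial>(\<nu> \<Otimes>\<^sub>M \<mu>)) = (\<integral>\<theta>. Qf \<theta> \<partial>\<mu>)" ..
    qed
    have Qf_le: "Qf \<theta> \<le> 0" if "\<theta> \<in> space \<mu>" for \<theta>
      unfolding Qf_def g_eq using core_pw(1)[OF alpha rpos beta_nn[OF that] rbeta[OF that] x0_bd] by simp
    have Qf_lt: "Qf \<theta> < 0" if "\<theta> \<in> space \<mu>" "g \<theta> \<noteq> 1" for \<theta>
      using core_pw(2)[OF alpha rpos beta_nn[OF that(1)] rbeta[OF that(1)] x0_bd] that(2) unfolding Qf_def g_eq by simp
    have S_le: "(\<integral>\<theta>. Qf \<theta> \<partial>\<mu>) \<le> 0"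
      using integral_mono[OF Qf_int, of "\<lambda>_. 0"] Qf_le by simp
    define M' where "M' y = mix (IAR \<nu> k p \<alpha> \<eta> \<kappa> \<mu>) k y" for y
    have M'_eq: "M' y = (\<integral>\<theta>. g \<theta> * k \<theta> y \<partial>\<mu>)" if "y \<in> space \<nu>" for y
      unfolding M'_def mix_def IAR_eq using that by (subst integral_density) (auto simp: g_pos less_imp_le)
    define F1 where "F1 y = f_alpha \<alpha> (M' y / p y) * p y" for y
    have Psi_F1: "Psi \<nu> k p \<alpha> (IAR \<nu> k p \<alpha> \<eta> \<kappa> \<mu>) = (\<integral>\<^sup>+ y. ennreal (F1 y) \<partial>\<nu>)"
      by (simp add: Psi_def F1_def M'_def)
    have AE_tan: "AE y in \<nu>. 0 \<le> F1 y \<and> F1 y \<le> (\<integral>\<theta>. h y \<theta> \<partial>\<mu>)"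
      using AE_good P.AE_integrable_fst[OF hi] AE_space
    proof eventually_elim
      case (elim y)
      have kI: "integrable \<mu> (\<lambda>\<theta>. k \<theta> y)" and Mp: "0 < M y" using elim by auto
      have hI: "integrable \<mu> (\<lambda>\<theta>. h y \<theta>)" using elim by simp
      have y: "y \<in> space \<nu>" using elim by simp
      define U where "U = u y"
      have Upos: "U > 0" unfolding U_def u_def using Mp A1_p[of y] by simp
      have MpU: "M y = p y * U" unfolding U_def u_def using A1_p[of y] by simp
      have gkI: "integrable \<mu> (\<lambda>\<theta>. g \<theta> * k \<theta> y)"
      proof (rule Bochner_Integration.integrable_bound)
        show "integrable \<mu> (\<lambda>\<theta>. exp L * k \<theta> y)" using kI by simp
        show "(\<lambda>\<theta>. g \<theta> * k \<theta> y) \<in> borel_measurable \<mu>" using y by measurable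
        show "AE \<theta> in \<mu>. norm (g \<theta> * k \<theta> y) \<le> norm (exp L * k \<theta> y)"
          by (rule AE_I2) (use g_bd g_pos k_nn in \<open>auto simp: abs_mult abs_of_pos[OF g_pos] intro!: mult_right_mono\<close>)
      qed
      have "(\<integral>\<theta>. exp (- L) * k \<theta> y \<partial>\<mu>) \<le> (\<integral>\<theta>. g \<theta> * k \<theta> y \<partial>\<mu>)"
        by (rule integral_mono) (use kI gkI g_bd k_nn in \<open>auto intro!: mult_right_mono\<close>)
      then have "exp (- L) * M y \<le> M' y" using M'_eq[OF y] by (simp add: M_def mix_def)
      moreover have "exp (- L) * M y > 0" using Mp by simp
      ultimately have M'p: "M' y > 0" by linarith
      define U' where "U' = M' y / p y"
      have U'pos: "U' > 0" unfolding U'_def using M'p A1_p[of y] by simp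
      have M'pU: "M' y = p y * U'" unfolding U'_def using A1_p[of y] by simp
      have F1_nn: "0 \<le> F1 y" unfolding F1_def U'_def[symmetric] using f_nonneg[OF U'pos alpha] A1_p[of y] by simp
      define c1 where "c1 = (f_alpha \<alpha> U' - f_alpha' \<alpha> U' * U') / U"
      define c2 where "c2 = f_alpha' \<alpha> U'"
      have low: "c1 * k \<theta> y + c2 * (g \<theta> * k \<theta> y) \<le> h y \<theta>" if th: "\<theta> \<in> space \<mu>" for \<theta>
      proof -
        have e2: "U powr (\<alpha> - 1) = U powr \<alpha> / U" using Upos by (simp add: powr_diff)
        have "h y \<theta> = k \<theta> y / U * (f_alpha \<alpha> U + U powr \<alpha> * f_alpha \<alpha> (g \<theta>) + U * f_alpha' \<alpha> U * (g \<theta> - 1))"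
          unfolding h_def h1_def h2_def h3_def F0_def U_def[symmetric] MpU e2 using Upos A1_p[of y]
          by (simp add: field_simps)
        also have "\<dots> = k \<theta> y / U * f_alpha \<alpha> (g \<theta> * U)" using decomp[OF Upos g_pos alpha] by simp
        finally have hh: "h y \<theta> = k \<theta> y / U * f_alpha \<alpha> (g \<theta> * U)" .
        have t: "f_alpha \<alpha> U' + f_alpha' \<alpha> U' * (g \<theta> * U - U') \<le> f_alpha \<alpha> (g \<theta> * U)"
          using tangent(1)[of "g \<theta> * U" U' \<alpha>] Upos g_pos[of \<theta>] U'pos alpha by simp
        have "c1 * k \<theta> y + c2 * (g \<theta> * k \<theta> y) = k \<theta> y / U * (f_alpha \<alpha> U' + f_alpha' \<alpha> U' * (g \<theta> * U - U'))"
          unfolding c1_def c2_def using Upos by (simp add: field_simps)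
        also have "\<dots> \<le> k \<theta> y / U * f_alpha \<alpha> (g \<theta> * U)"
          using t k_nn[of \<theta> y] Upos by (intro mult_left_mono) auto
        finally show ?thesis unfolding hh .
      qed
      have "(\<integral>\<theta>. c1 * k \<theta> y + c2 * (g \<theta> * k \<theta> y) \<partial>\<mu>) = c1 * M y + c2 * M' y"
        using kI gkI M'_eq[OF y] by (simp add: M_def mix_def)
      also have "\<dots> = F1 y" unfolding c1_def c2_def F1_def U'_def[symmetric] MpU M'pU using Upos
        by (simp add: field_simps)
      finally have "F1 y = (\<integral>\<theta>. c1 * k \<theta> y + c2 * (g \<theta> * k \<theta> y) \<partial>\<mu>)" ..
      also have "\<dots> \<le> (\<integral>\<theta>. h y \<theta> \<partial>\<mu>)"
        by (rule integral_mono) (use kI gkI hI low in auto)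
      finally show ?case using F1_nn by simp
    qed
    have hf_int: "integrable \<nu> (\<lambda>y. \<integral>\<theta>. h y \<theta> \<partial>\<mu>)" using P.integrable_fst[OF hi] .
    have hf_nn: "AE y in \<nu>. 0 \<le> (\<integral>\<theta>. h y \<theta> \<partial>\<mu>)" using AE_tan by eventually_elim simp
    have tot: "(\<integral>y. (\<integral>\<theta>. h y \<theta> \<partial>\<mu>) \<partial>\<nu>) = (\<integral>y. F0 y \<partial>\<nu>) + (\<integral>\<theta>. Qf \<theta> \<partial>\<mu>)"
      using P.integral_fst[OF hi] Iall I1 I23 by simp
    have tot_nn: "0 \<le> (\<integral>y. F0 y \<partial>\<nu>) + (\<integral>\<theta>. Qf \<theta> \<partial>\<mu>)"
      using integral_nonneg_AE[OF hf_nn] tot by simp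
    have PsiI_le: "Psi \<nu> k p \<alpha> (IAR \<nu> k p \<alpha> \<eta> \<kappa> \<mu>) \<le> ennreal ((\<integral>y. F0 y \<partial>\<nu>) + (\<integral>\<theta>. Qf \<theta> \<partial>\<mu>))"
    proof -
      have "Psi \<nu> k p \<alpha> (IAR \<nu> k p \<alpha> \<eta> \<kappa> \<mu>) \<le> (\<integral>\<^sup>+ y. ennreal (\<integral>\<theta>. h y \<theta> \<partial>\<mu>) \<partial>\<nu>)"
        unfolding Psi_F1 by (rule nn_integral_mono_AE) (use AE_tan in \<open>eventually_elim, simp add: ennreal_leI\<close>)
      also have "\<dots> = ennreal (\<integral>y. (\<integral>\<theta>. h y \<theta> \<partial>\<mu>) \<partial>\<nu>)" by (rule nn_integral_eq_integral[OF hf_int hf_nn])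
      finally show ?thesis unfolding tot .
    qed
    have conj1: "Psi \<nu> k p \<alpha> (IAR \<nu> k p \<alpha> \<eta> \<kappa> \<mu>) \<le> Psi \<nu> k p \<alpha> \<mu>"
      using PsiI_le S_le unfolding Psi_eq by (meson add_le_same_cancel1 ennreal_leI order_trans)
    have conj2: "IAR \<nu> k p \<alpha> \<eta> \<kappa> \<mu> = \<mu>" if eq: "Psi \<nu> k p \<alpha> (IAR \<nu> k p \<alpha> \<eta> \<kappa> \<mu>) = Psi \<nu> k p \<alpha> \<mu>"
    proof -
      have "ennreal (\<integral>y. F0 y \<partial>\<nu>) \<le> ennreal ((\<integral>y. F0 y \<partial>\<nu>) + (\<integral>\<theta>. Qf \<theta> \<partial>\<mu>))"
        using PsiI_le eq Psi_eq by simp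
      then have "(\<integral>y. F0 y \<partial>\<nu>) \<le> (\<integral>y. F0 y \<partial>\<nu>) + (\<integral>\<theta>. Qf \<theta> \<partial>\<mu>)"
        using tot_nn by (simp add: ennreal_le_iff)
      then have S0: "(\<integral>\<theta>. - Qf \<theta> \<partial>\<mu>) = 0" using S_le by simp
      have "AE \<theta> in \<mu>. - Qf \<theta> = 0"
        using integral_nonneg_eq_0_iff_AE[of \<mu> "\<lambda>\<theta>. - Qf \<theta>"] Qf_int Qf_le S0 by (auto intro!: AE_I2)
      then have AEg: "AE \<theta> in \<mu>. ennreal (g \<theta>) = 1"
        using AE_space by eventually_elim (use Qf_lt in force)
      have "IAR \<nu> k p \<alpha> \<eta> \<kappa> \<mu> = density \<mu> (\<lambda>_. 1)"
        unfolding IAR_eq by (rule density_cong) (use AEg in auto)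
      then show ?thesis by (simp add: density_1)
    qed
    show ?thesis using conj1 conj2 by auto
  qed
qed

end
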